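(* In the setting of the context, $K_1(\theta_0,\theta_0+c)\downarrow K_1$ and $K_1(\theta_0-c,\theta_0)\downarrow K_1$ as $c\downarrow0$.
   Context: Let $G\in\mathrm{C}^2(\mathbb{R})$ be coercive ($G(p)\to\infty$ as $p\to\pm\infty$), $p_1<p_2$ with $G'(p_1)<0<G'(p_2)$, $L=\frac{G'(p_2)}{G'(p_2)-G'(p_1)}$, $\ell\in(0,\min\{L,1-L\})$, and $K_1=\max\{|G'(p)|:\,p\in[p_1,p_2]\}$. Let $f$ be a $1$-periodic function in $\mathrm{C}^1(\mathbb{R})$ with $f'$ Lipschitz, $p_1\le f\le p_2$, $f=p_1$ on $[0,L-\ell]$, $f=p_2$ on $[L,1-\ell]$, and $\int_0^1G'(f(x))dx=0$. Define the $1$-periodic Lipschitz potential $V(x)=-f'(x)-G(f(x))$ and $\theta_0=\int_0^1f(x)dx$. For each $\theta\in\mathbb{R}$, $f_\theta\in\mathrm{C}^1(\mathbb{R})$ denotes the unique $1$-periodic function with $\int_0^1f_\theta=\theta$ and $f_\theta'+G(f_\theta)+V=\overline{H}(\theta)$ on $\mathbb{R}$ for some (unique) constant $\overline{H}(\theta)$. For $\theta_1<\theta_2$, $K_1(\theta_1,\theta_2)=\max\{|G'(p)|:\,\min_{[0,1]}f_{\theta_1}\le p\le\max_{[0,1]}f_{\theta_2}\}$. *)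

theory Defs
  imports "HOL-Analysis.Analysis"
begin

text \<open>K_1(theta1,theta2) = max{|G'(p)| : min f_theta1 <= p <= max f_theta2},
  where F theta is the cell solution f_theta (a 1-periodic continuous function,
  so min/max over [0,1] are Inf/Sup of its image of {0..1}).\<close>
definition K1_pair :: "(real \<Rightarrow> real) \<Rightarrow> (real \<Rightarrow> real \<Rightarrow> real) \<Rightarrow> real \<Rightarrow> real \<Rightarrow> real" where
  "K1_pair G' F \<theta>1 \<theta>2 =
     Sup ((\<lambda>p. \<bar>G' p\<bar>) ` {Inf (F \<theta>1 ` {0..1}) .. Sup (F \<theta>2 ` {0..1})})"

end

theory Submission
  imports Defs
begin


lemma deriv_cont_on:
  assumes "\<And>x. (u has_real_derivative u' x) (at x)"
  shows "continuous_on S u"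
  by (meson DERIV_isCont assms continuous_at_imp_continuous_on)

lemma lip_from_deriv:
  fixes g g' :: "real \<Rightarrow> real"
  assumes d: "\<And>x. a \<le> x \<Longrightarrow> x \<le> b \<Longrightarrow> (g has_real_derivative g' x) (at x)"
  and bd: "\<And>x. a \<le> x \<Longrightarrow> x \<le> b \<Longrightarrow> \<bar>g' x\<bar> \<le> M"
  and xy: "a \<le> x" "x \<le> b" "a \<le> y" "y \<le> b"
  shows "\<bar>g x - g y\<bar> \<le> M * \<bar>x - y\<bar>"
proof -
  have main: "\<bar>g q - g p\<bar> \<le> M * \<bar>q - p\<bar>" if "a \<le> p" "p < q" "q \<le> b" for p q
  proof -
    have "\<exists>z. p < z \<and> z < q \<and> g q - g p = (q - p) * g' z"
    proof (rule MVT2)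
      show "p < q" using that by simp
      fix x assume "p \<le> x" "x \<le> q"
      then show "(g has_real_derivative g' x) (at x)" using d that by auto
    qed
    then obtain z where z: "p < z" "z < q" "g q - g p = (q - p) * g' z" by blast
    have "\<bar>g' z\<bar> \<le> M" using bd z that by auto
    then have "\<bar>(q - p) * g' z\<bar> \<le> \<bar>q - p\<bar> * M"
      by (simp add: abs_mult mult_left_mono)
    then show ?thesis using z by (simp add: mult.commute)
  qed
  show ?thesis
  proof (cases "x < y")
    case True then show ?thesis using main[of x y] xy by (simp add: abs_minus_commute)
  next
    case False
    then show ?thesis using main[of y x] xy
      by (cases "x = y") (auto simp: abs_minus_commute)
  qed
qed

lemma gronwall0:
  fixes w w' :: "real \<Rightarrow> real"
  assumes d: "\<And>x. s \<le> x \<Longrightarrow> x \<le> b \<Longrightarrow> (w has_real_derivative w' x) (at x)"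
  and bd: "\<And>x. s \<le> x \<Longrightarrow> x \<le> b \<Longrightarrow> \<bar>w' x\<bar> \<le> K * \<bar>w x\<bar>"
  and w0: "w s = 0" and sb: "s \<le> b"
  shows "w b = 0"
proof -
  define phi where "phi x = exp (-(2*K*x)) * (w x)^2" for x
  have "phi b \<le> phi s"
  proof (rule DERIV_nonpos_imp_nonincreasing[OF sb])
    fix x assume x: "s \<le> x" "x \<le> b"
    have D: "(phi has_real_derivative
        (exp (-(2*K*x)) * (-(2*K)) * (w x)^2 + exp (-(2*K*x)) * (2 * w x * w' x))) (at x)"
      unfolding phi_def
      by (auto intro!: derivative_eq_intros d[OF x] simp: power2_eq_square algebra_simps)
    have "w x * w' x \<le> \<bar>w x\<bar> * \<bar>w' x\<bar>" by (metis abs_ge_self abs_mult)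
    also have "\<dots> \<le> \<bar>w x\<bar> * (K * \<bar>w x\<bar>)" using bd[OF x] by (simp add: mult_left_mono)
    also have "\<dots> = K * (w x)^2" by (simp add: power2_eq_square)
    finally have "w x * w' x \<le> K * (w x)^2" .
    then have "(-(2*K)) * (w x)^2 + (2 * w x * w' x) \<le> 0" by simp
    then have "exp (-(2*K*x)) * ((-(2*K)) * (w x)^2 + (2 * w x * w' x)) \<le> 0"
      by (simp add: mult_nonneg_nonpos)
    then show "\<exists>y. (phi has_real_derivative y) (at x) \<and> y \<le> 0"
      using D by (intro exI[of _ "exp (-(2*K*x)) * (-(2*K)) * (w x)^2 + exp (-(2*K*x)) * (2 * w x * w' x)"])
        (simp add: algebra_simps)
  qed
  then have "phi b \<le> 0" using w0 by (simp add: phi_def)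
  then have "(w b)^2 \<le> 0" unfolding phi_def
    by (simp add: mult_le_0_iff)
  then show ?thesis by simp
qed

lemma crossing:
  fixes w w' :: "real \<Rightarrow> real"
  assumes d: "\<And>x. (w has_real_derivative w' x) (at x)"
  and ab: "a < b" and wa: "w a > 0" and wb: "w b < 0"
  shows "\<exists>s. a < s \<and> s < b \<and> w s = 0 \<and> w' s \<le> 0"
proof -
  have cont: "continuous_on UNIV w" by (rule deriv_cont_on[OF d])
  define S where "S = {a..b} \<inter> {x. 0 \<le> w x}"
  have cS: "closed S" unfolding S_def
    by (intro closed_Int closed_atLeastAtMost closed_Collect_le cont continuous_on_const)
  have "a \<in> S" using wa ab by (auto simp: S_def)
  then have neS: "S \<noteq> {}" by blast
  have bS: "bdd_above S" unfolding S_def by (auto intro: bdd_aboveI[of _ b])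
  define s where "s = Sup S"
  have sS: "s \<in> S" unfolding s_def using closed_contains_Sup[OF neS bS cS] .
  have upper: "x \<le> s" if "x \<in> S" for x using cSup_upper[OF that bS] s_def by simp
  have sa: "a \<le> s" "s \<le> b" "0 \<le> w s" using sS by (auto simp: S_def)
  have sb: "s < b" using sa wb by (metis order_le_less not_le)
  have neg: "w x < 0" if "s < x" "x \<le> b" for x
  proof (rule ccontr)
    assume "\<not> w x < 0"
    then have "x \<in> S" using that sa by (auto simp: S_def)
    then show False using upper that by fastforce
  qed
  have ws: "w s = 0"
  proof (rule ccontr)
    assume "w s \<noteq> 0"
    then have "w s > 0" using sa by simp
    obtain z where z: "s \<le> z" "z \<le> b" "w z = 0"
      using IVT2'[of w b 0 s] \<open>w s > 0\<close> wb sb continuous_on_subset[OF cont] by force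
    then have "z \<in> S" using sa by (auto simp: S_def)
    then have "z = s" using upper z by fastforce
    then show False using z \<open>w s \<noteq> 0\<close> by simp
  qed
  have "s \<noteq> a" using ws wa by auto
  then have as: "a < s" using sa by simp
  have "w' s \<le> 0"
  proof (rule ccontr)
    assume "\<not> w' s \<le> 0"
    then obtain dd where dd: "dd > 0" "\<forall>h>0. h < dd \<longrightarrow> w s < w (s + h)"
      using DERIV_pos_inc_right[OF d[of s]] by force
    define h where "h = min (dd/2) (b - s)"
    have "h > 0" "h < dd" "s + h \<le> b" using dd sb by (auto simp: h_def)
    then have "w s < w (s + h)" "w (s + h) < 0" using dd neg[of "s+h"] by auto
    then show False using ws by simp
  qed
  then show ?thesis using as sb ws by blast
qed

lemma per_nat:
  fixes u :: "real \<Rightarrow> 'a"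
  assumes p: "\<And>x. u (x + 1) = u x"
  shows "u (x + real n) = u x"
proof (induction n)
  case (Suc n)
  have "u (x + real (Suc n)) = u ((x + real n) + 1)" by (simp add: algebra_simps)
  then show ?case using p Suc by simp
qed simp

lemma per_floor:
  fixes u :: "real \<Rightarrow> 'a"
  assumes p: "\<And>x. u (x + 1) = u x"
  shows "u x = u (x - of_int (floor x))"
proof (cases "floor x \<ge> 0")
  case True
  have e: "x = (x - of_int (floor x)) + real (nat (floor x))" using True by simp
  have "u ((x - of_int (floor x)) + real (nat (floor x))) = u (x - of_int (floor x))"
    by (rule per_nat[where u=u, OF p])
  then show ?thesis using e by simp
next
  case False
  have e: "x - of_int (floor x) = x + real (nat (- floor x))" using False by simp
  have "u (x + real (nat (- floor x))) = u x" by (rule per_nat[where u=u, OF p])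
  then show ?thesis unfolding e by (rule sym)
qed

lemma per_exists_nat:
  fixes x y :: real
  shows "\<exists>n::nat. y < x + real n"
proof -
  obtain n where "y - x < real n" using reals_Archimedean2 by blast
  then show ?thesis by (intro exI[of _ n]) simp
qed

lemma G_lip_bounded:
  fixes G G' :: "real \<Rightarrow> real"
  assumes G: "\<And>p. (G has_real_derivative G' p) (at p)"
  and cG': "continuous_on UNIV G'"
  shows "\<exists>K. \<forall>y z. \<bar>y\<bar> \<le> B \<longrightarrow> \<bar>z\<bar> \<le> B \<longrightarrow> \<bar>G y - G z\<bar> \<le> K * \<bar>y - z\<bar>"
proof -
  have "compact (G' ` {-B..B})"
    by (intro compact_continuous_image continuous_on_subset[OF cG']) auto
  then have "bounded (G' ` {-B..B})" by (rule compact_imp_bounded)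
  then obtain K where K: "\<forall>x\<in>G' ` {-B..B}. \<bar>x\<bar> \<le> K"
    unfolding bounded_real by blast
  show ?thesis
  proof (intro exI allI impI)
    fix y z :: real assume "\<bar>y\<bar> \<le> B" "\<bar>z\<bar> \<le> B"
    then show "\<bar>G y - G z\<bar> \<le> K * \<bar>y - z\<bar>"
      using lip_from_deriv[of "-B" B G G' K y z] G K by auto
  qed
qed

lemma order_sol:
  fixes u v u' v' G G' V :: "real \<Rightarrow> real" and Hu Hv :: real
  assumes du: "\<And>x. (u has_real_derivative u' x) (at x)"
  and dv: "\<And>x. (v has_real_derivative v' x) (at x)"
  and eu: "\<And>x. u' x + G (u x) + V x = Hu"
  and ev: "\<And>x. v' x + G (v x) + V x = Hv"
  and G: "\<And>p. (G has_real_derivative G' p) (at p)"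
  and cG': "continuous_on UNIV G'"
  and pu: "\<And>x. u (x + 1) = u x"
  and pv: "\<And>x. v (x + 1) = v x"
  and int: "integral {0..1} u < integral {0..1} v"
  shows "u x \<le> v x"
proof (rule ccontr)
  assume "\<not> u x \<le> v x"
  then have x1: "v x - u x < 0" by simp
  have cu: "continuous_on S u" for S using deriv_cont_on[OF du] .
  have cv: "continuous_on S v" for S using deriv_cont_on[OF dv] .
  have "\<exists>x2\<in>{0..1}. u x2 < v x2"
  proof (rule ccontr)
    assume "\<not> ?thesis"
    then have "\<forall>y\<in>{0..1}. v y \<le> u y" by auto
    then have "integral {0..1} v \<le> integral {0..1} u"
      by (intro integral_le integrable_continuous_interval cu cv) auto
    then show False using int by simp
  qed
  then obtain x2 where x2: "v x2 - u x2 > 0" by auto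
  define w where "w y = v y - u y" for y
  define w' where "w' y = v' y - u' y" for y
  have dw: "(w has_real_derivative w' y) (at y)" for y
    unfolding w_def w'_def by (intro derivative_intros du dv)
  have pw: "w (y + real n) = w y" for y n
    unfolding w_def using per_nat[where u=u, OF pu] per_nat[where u=v, OF pv] by simp
  have w'0: "w' y = Hv - Hu" if "w y = 0" for y
  proof -
    have "u y = v y" using that by (simp add: w_def)
    then show ?thesis using eu[of y] ev[of y] by (simp add: w'_def)
  qed
  obtain n where n: "x2 < x + real n" using per_exists_nat by blast
  obtain m where m: "x < x2 + real m" using per_exists_nat by blast
  have wxn: "w (x + real n) < 0" using pw x1 by (simp add: w_def)
  have wx2m: "w (x2 + real m) > 0" using pw[of x2 m] x2 by (simp add: w_def)
  obtain s1 where s1: "x2 < s1" "s1 < x + real n" "w s1 = 0" "w' s1 \<le> 0"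
    using crossing[OF dw n] x2 wxn by (auto simp: w_def)
  have dmw: "((\<lambda>y. - w y) has_real_derivative - w' y) (at y)" for y
    by (intro derivative_intros dw)
  obtain s2 where s2: "x < s2" "s2 < x2 + real m" "- w s2 = 0" "- w' s2 \<le> 0"
    using crossing[OF dmw m] x1 wx2m by (auto simp: w_def)
  have "Hv \<le> Hu" using s1 w'0 by simp
  moreover have "Hu \<le> Hv" using s2 w'0[of s2] by simp
  ultimately have HH: "Hu = Hv" by simp
  define b where "b = x + real n"
  have "compact (u ` {s1..b})" "compact (v ` {s1..b})"
    by (intro compact_continuous_image cu cv compact_Icc)+
  then have "bounded (u ` {s1..b})" "bounded (v ` {s1..b})" by (auto intro: compact_imp_bounded)
  then obtain B1 B2 where B1: "\<forall>y\<in>u ` {s1..b}. \<bar>y\<bar> \<le> B1" and B2: "\<forall>y\<in>v ` {s1..b}. \<bar>y\<bar> \<le> B2"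
    unfolding bounded_real by blast
  obtain K where K: "\<forall>y z. \<bar>y\<bar> \<le> max B1 B2 \<longrightarrow> \<bar>z\<bar> \<le> max B1 B2 \<longrightarrow> \<bar>G y - G z\<bar> \<le> K * \<bar>y - z\<bar>"
    using G_lip_bounded[OF G cG'] by blast
  have "w b = 0"
  proof (rule gronwall0[of s1 b w w' K])
    fix y assume y: "s1 \<le> y" "y \<le> b"
    show "(w has_real_derivative w' y) (at y)" by (rule dw)
    have "w' y = - (G (v y) - G (u y))" using eu[of y] ev[of y] HH by (simp add: w'_def)
    moreover have "\<bar>u y\<bar> \<le> max B1 B2" "\<bar>v y\<bar> \<le> max B1 B2" using B1 B2 y by (fastforce simp: le_max_iff_disj)+
    ultimately show "\<bar>w' y\<bar> \<le> K * \<bar>w y\<bar>" using K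
      by (simp add: w_def abs_minus_commute)
  qed (use s1 b_def in auto)
  then show False using wxn b_def by simp
qed



lemma small_int_aux:
  fixes g :: "real \<Rightarrow> real"
  assumes c: "continuous_on {0..1} g" and nn: "\<forall>x\<in>{0..1}. 0 \<le> g x"
  and lip: "\<forall>x\<in>{0..1}. \<forall>z\<in>{0..1}. \<bar>g x - g z\<bar> \<le> M * \<bar>x - z\<bar>"
  and M: "M > 0" and y: "y \<in> {lo..hi}" and sub: "{lo..hi} \<subseteq> {0..1}"
  and len: "hi - lo = min (1/2) (e/(2*M))" and e: "e > 0" and gy: "g y \<ge> e"
  shows "e/2 * min (1/2) (e/(2*M)) \<le> integral {0..1} g"
proof -
  let ?w = "min (1/2) (e/(2*M))"
  have lohi: "lo \<le> hi" using y by simp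
  have low: "e/2 \<le> g x" if x: "x \<in> {lo..hi}" for x
  proof -
    have "\<bar>g y - g x\<bar> \<le> M * \<bar>y - x\<bar>" using lip sub x y by blast
    moreover have "\<bar>y - x\<bar> \<le> hi - lo" using x y by auto
    then have "\<bar>y - x\<bar> \<le> ?w" using len by simp
    moreover have "M * ?w \<le> e/2"
    proof -
      have "M * ?w \<le> M * (e/(2*M))" using M by (intro mult_left_mono) auto
      also have "\<dots> = e/2" using M by simp
      finally show ?thesis .
    qed
    ultimately have "\<bar>g y - g x\<bar> \<le> e/2"
      using M by (smt (verit) mult_left_mono)
    then show ?thesis using gy by linarith
  qed
  have ci: "continuous_on {lo..hi} g" using continuous_on_subset[OF c sub] .
  have "integral {lo..hi} (\<lambda>_. e/2) \<le> integral {lo..hi} g"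
    by (intro integral_le integrable_continuous_interval ci continuous_on_const) (use low in auto)
  moreover have "integral {lo..hi} (\<lambda>_. e/2) = e/2 * ?w" using lohi len by simp
  moreover have "integral {lo..hi} g \<le> integral {0..1} g"
    by (intro integral_subset_le sub integrable_continuous_interval ci c) (use nn in auto)
  ultimately show ?thesis by linarith
qed

lemma small_int:
  fixes g :: "real \<Rightarrow> real"
  assumes c: "continuous_on {0..1} g" and nn: "\<forall>x\<in>{0..1}. 0 \<le> g x"
  and lip: "\<forall>x\<in>{0..1}. \<forall>z\<in>{0..1}. \<bar>g x - g z\<bar> \<le> M * \<bar>x - z\<bar>"
  and M: "M > 0" and y: "y \<in> {0..1}" and e: "e > 0" and gy: "g y \<ge> e"
  shows "e/2 * min (1/2) (e/(2*M)) \<le> integral {0..1} g"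
proof (cases "y \<le> 1/2")
  case True
  show ?thesis
    by (rule small_int_aux[OF c nn lip M _ _ _ e gy, of y "y + min (1/2) (e/(2*M))"])
      (use True y e M in auto)
next
  case False
  show ?thesis
    by (rule small_int_aux[OF c nn lip M _ _ _ e gy, of "y - min (1/2) (e/(2*M))" y])
      (use False y e M in auto)
qed

definition SupI :: "(real \<Rightarrow> real) \<Rightarrow> real \<Rightarrow> real \<Rightarrow> real" where
  "SupI h a b = Sup (h ` {a..b})"

lemma SupI_bdd:
  fixes h :: "real \<Rightarrow> real"
  assumes "continuous_on UNIV h"
  shows "bdd_above (h ` {a..b})"
proof -
  have "continuous_on {a..b} h" by (rule continuous_on_subset[OF assms]) simp
  then have "compact (h ` {a..b})"
    by (rule compact_continuous_image) auto
  then show ?thesis by (rule bounded_imp_bdd_above[OF compact_imp_bounded])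
qed

lemma SupI_mono:
  assumes h: "continuous_on UNIV h" and "a \<le> a0" "a0 \<le> b0" "b0 \<le> b"
  shows "SupI h a0 b0 \<le> SupI h a b"
  unfolding SupI_def
  by (rule cSup_subset_mono) (use assms SupI_bdd[OF h] in auto)

lemma SupI_cont:
  assumes h: "continuous_on UNIV h" and ab: "a0 \<le> b0" and ep: "\<epsilon> > 0"
  shows "\<exists>\<delta>>0. \<forall>a b. a \<le> a0 \<longrightarrow> a0 - a < \<delta> \<longrightarrow> b0 \<le> b \<longrightarrow> b - b0 < \<delta> \<longrightarrow>
            SupI h a b \<le> SupI h a0 b0 + \<epsilon>"
proof -
  have ct: "\<exists>d>0. \<forall>x. \<bar>x - q\<bar> < d \<longrightarrow> \<bar>h x - h q\<bar> < \<epsilon>" for q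
  proof -
    have "continuous (at q) h" using h by (simp add: continuous_on_eq_continuous_at)
    then have "\<forall>e>0. \<exists>d>0. \<forall>x. dist x q < d \<longrightarrow> dist (h x) (h q) < e"
      by (simp only: continuous_at_eps_delta)
    then obtain d where "d > 0" "\<forall>x. dist x q < d \<longrightarrow> dist (h x) (h q) < \<epsilon>"
      using ep by blast
    then show ?thesis unfolding dist_real_def by blast
  qed
  obtain d1 where d1: "d1 > 0" "\<forall>x. \<bar>x - a0\<bar> < d1 \<longrightarrow> \<bar>h x - h a0\<bar> < \<epsilon>"
    using ct by blast
  obtain d2 where d2: "d2 > 0" "\<forall>x. \<bar>x - b0\<bar> < d2 \<longrightarrow> \<bar>h x - h b0\<bar> < \<epsilon>"
    using ct by blast
  have ha0: "h a0 \<le> SupI h a0 b0" "h b0 \<le> SupI h a0 b0"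
    unfolding SupI_def using ab by (auto intro!: cSup_upper SupI_bdd[OF h])
  show ?thesis
  proof (intro exI[of _ "min d1 d2"] conjI allI impI)
    show "min d1 d2 > 0" using d1 d2 by simp
    fix a b assume a: "a \<le> a0" "a0 - a < min d1 d2" and b: "b0 \<le> b" "b - b0 < min d1 d2"
    show "SupI h a b \<le> SupI h a0 b0 + \<epsilon>"
      unfolding SupI_def
    proof (rule cSup_least)
      show "h ` {a..b} \<noteq> {}" using a b ab by auto
      fix z assume "z \<in> h ` {a..b}"
      then obtain p where p: "p \<in> {a..b}" "z = h p" by auto
      show "z \<le> Sup (h ` {a0..b0}) + \<epsilon>"
      proof (cases "p < a0")
        case True
        then have "\<bar>h p - h a0\<bar> < \<epsilon>" using d1 a p by auto
        then show ?thesis using ha0 p unfolding SupI_def by linarith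
      next
        case False
        show ?thesis
        proof (cases "p > b0")
          case True
          then have "\<bar>h p - h b0\<bar> < \<epsilon>" using d2 b p by auto
          then show ?thesis using ha0 p unfolding SupI_def by linarith
        next
          case False2: False
          then have "z \<le> Sup (h ` {a0..b0})" using False p
            by (auto intro!: cSup_upper SupI_bdd[OF h])
          then show ?thesis using ep by linarith
        qed
      qed
    qed
  qed
qed



theorem lemma5p2:
  fixes G G' G'' :: "real \<Rightarrow> real"
    and p1 p2 L ell :: real
    and f f' V :: "real \<Rightarrow> real"
    and \<theta>0 :: real
    and F F' :: "real \<Rightarrow> real \<Rightarrow> real"
  assumes G_deriv: "\<And>p. (G has_real_derivative G' p) (at p)"
    and G'_deriv: "\<And>p. (G' has_real_derivative G'' p) (at p)"
    and G''_cont: "continuous_on UNIV G''"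
    and G_coercive_top: "filterlim G at_top at_top"
    and G_coercive_bot: "filterlim G at_top at_bot"
    and p12: "p1 < p2"
    and Gp1: "G' p1 < 0" and Gp2: "0 < G' p2"
    and L_def: "L = G' p2 / (G' p2 - G' p1)"
    and ell_pos: "0 < ell" and ell_lt: "ell < min L (1 - L)"
    and f_deriv: "\<And>x. (f has_real_derivative f' x) (at x)"
    and f'_lip: "\<exists>C. \<forall>x y. \<bar>f' x - f' y\<bar> \<le> C * \<bar>x - y\<bar>"
    and f_per: "\<And>x. f (x + 1) = f x"
    and f_bounds: "\<And>x. p1 \<le> f x \<and> f x \<le> p2"
    and f_left: "\<And>x. x \<in> {0..L - ell} \<Longrightarrow> f x = p1"
    and f_right: "\<And>x. x \<in> {L..1 - ell} \<Longrightarrow> f x = p2"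
    and f_int: "integral {0..1} (\<lambda>x. G' (f x)) = 0"
    and V_def: "\<And>x. V x = - f' x - G (f x)"
    and theta0_def: "\<theta>0 = integral {0..1} f"
    and F_deriv: "\<And>\<theta> x. (F \<theta> has_real_derivative F' \<theta> x) (at x)"
    and F'_cont: "\<And>\<theta>. continuous_on UNIV (F' \<theta>)"
    and F_per: "\<And>\<theta> x. F \<theta> (x + 1) = F \<theta> x"
    and F_int: "\<And>\<theta>. integral {0..1} (F \<theta>) = \<theta>"
    and F_cell: "\<And>\<theta>. \<exists>H. \<forall>x. F' \<theta> x + G (F \<theta> x) + V x = H"
  shows "(\<forall>c1 c2. 0 < c1 \<and> c1 \<le> c2 \<longrightarrow>
            K1_pair G' F \<theta>0 (\<theta>0 + c1) \<le> K1_pair G' F \<theta>0 (\<theta>0 + c2))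
       \<and> ((\<lambda>c. K1_pair G' F \<theta>0 (\<theta>0 + c)) \<longlongrightarrow> Sup ((\<lambda>p. \<bar>G' p\<bar>) ` {p1..p2})) (at_right 0)
       \<and> (\<forall>c1 c2. 0 < c1 \<and> c1 \<le> c2 \<longrightarrow>
            K1_pair G' F (\<theta>0 - c1) \<theta>0 \<le> K1_pair G' F (\<theta>0 - c2) \<theta>0)
       \<and> ((\<lambda>c. K1_pair G' F (\<theta>0 - c) \<theta>0) \<longlongrightarrow> Sup ((\<lambda>p. \<bar>G' p\<bar>) ` {p1..p2})) (at_right 0)"
proof -
  have cG': "continuous_on UNIV G'" by (rule deriv_cont_on[OF G'_deriv])
  have cG: "continuous_on UNIV G" by (rule deriv_cont_on[OF G_deriv])
  have "\<forall>\<theta>. \<exists>h. \<forall>x. F' \<theta> x + G (F \<theta> x) + V x = h" using F_cell by blast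
  then have "\<exists>H. \<forall>\<theta>. \<forall>x. F' \<theta> x + G (F \<theta> x) + V x = H \<theta>" by (rule choice)
  then obtain H where H: "\<And>\<theta> x. F' \<theta> x + G (F \<theta> x) + V x = H \<theta>" by blast
  have ef: "\<And>x. f' x + G (f x) + V x = 0" using V_def by simp
  have cF: "\<And>\<theta> S. continuous_on S (F \<theta>)" using deriv_cont_on[OF F_deriv] by blast
  have cf: "\<And>S. continuous_on S f" using deriv_cont_on[OF f_deriv] by blast
  have ordF: "F \<theta>1 x \<le> F \<theta>2 x" if "\<theta>1 < \<theta>2" for \<theta>1 \<theta>2 x
    by (rule order_sol[OF F_deriv[of \<theta>1] F_deriv[of \<theta>2] H[of \<theta>1] H[of \<theta>2] G_deriv cG'
          F_per[of \<theta>1] F_per[of \<theta>2]]) (simp add: F_int that)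
  have ordF': "F \<theta>1 x \<le> F \<theta>2 x" if "\<theta>1 \<le> \<theta>2" for \<theta>1 \<theta>2 x
    using ordF[of \<theta>1 \<theta>2 x] that by (cases "\<theta>1 = \<theta>2") auto
  have ordf: "f x \<le> F (\<theta>0 + c) x" if "0 < c" for c x
    by (rule order_sol[OF f_deriv F_deriv[of "\<theta>0 + c"] ef H[of "\<theta>0 + c"] G_deriv cG'
          f_per F_per[of "\<theta>0 + c"]]) (simp add: F_int that theta0_def[symmetric])
  have ordf2: "F (\<theta>0 - c) x \<le> f x" if "0 < c" for c x
    by (rule order_sol[OF F_deriv[of "\<theta>0 - c"] f_deriv H[of "\<theta>0 - c"] ef G_deriv cG'
          F_per[of "\<theta>0 - c"] f_per]) (simp add: F_int that theta0_def[symmetric])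
  obtain Cf where Cf: "\<forall>x y. \<bar>f' x - f' y\<bar> \<le> Cf * \<bar>x - y\<bar>" using f'_lip by blast
  define Mf where "Mf = \<bar>f' 0\<bar> + \<bar>Cf\<bar>"
  have f'b: "\<bar>f' x\<bar> \<le> Mf" if x: "x \<in> {0..1}" for x
  proof -
    have "\<bar>f' x - f' 0\<bar> \<le> Cf * \<bar>x\<bar>" using Cf by (metis diff_zero)
    also have "\<dots> \<le> \<bar>Cf\<bar> * \<bar>x\<bar>" by (simp add: mult_right_mono)
    also have "\<dots> \<le> \<bar>Cf\<bar>" using x by (intro mult_left_le) auto
    finally show ?thesis unfolding Mf_def by linarith
  qed
  have "compact (F (\<theta>0 - 1) ` {0..1})" "compact (F (\<theta>0 + 1) ` {0..1})"
    by (intro compact_continuous_image cF compact_Icc)+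
  then have "bounded (F (\<theta>0 - 1) ` {0..1})" "bounded (F (\<theta>0 + 1) ` {0..1})"
    by (auto intro: compact_imp_bounded)
  then obtain A1 A2 where A1: "\<forall>y\<in>F (\<theta>0 - 1) ` {0..1}. \<bar>y\<bar> \<le> A1"
    and A2: "\<forall>y\<in>F (\<theta>0 + 1) ` {0..1}. \<bar>y\<bar> \<le> A2"
    unfolding bounded_real by blast
  define A where "A = max (max A1 A2) (max \<bar>p1\<bar> \<bar>p2\<bar>)"
  have FA: "\<bar>F \<theta> x\<bar> \<le> A" if "\<theta> \<in> {\<theta>0 - 1..\<theta>0 + 1}" "x \<in> {0..1}" for \<theta> x
  proof -
    have "F (\<theta>0 - 1) x \<le> F \<theta> x" "F \<theta> x \<le> F (\<theta>0 + 1) x" using that ordF' by auto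
    moreover have "\<bar>F (\<theta>0 - 1) x\<bar> \<le> A1" "\<bar>F (\<theta>0 + 1) x\<bar> \<le> A2" using A1 A2 that(2) by auto
    ultimately show ?thesis unfolding A_def by (simp add: abs_le_iff le_max_iff_disj) linarith
  qed
  have fA: "\<bar>f x\<bar> \<le> A" for x using f_bounds[of x] unfolding A_def
    by (simp add: abs_le_iff le_max_iff_disj) linarith
  have "compact (G ` {-A..A})" by (intro compact_continuous_image continuous_on_subset[OF cG]) auto
  then have "bounded (G ` {-A..A})" by (rule compact_imp_bounded)
  then obtain KG where KG0: "\<forall>y\<in>G ` {-A..A}. \<bar>y\<bar> \<le> KG" unfolding bounded_real by blast
  have KG: "\<bar>G p\<bar> \<le> KG" if "\<bar>p\<bar> \<le> A" for p using KG0 that by (simp add: abs_le_iff)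
  define KV where "KV = Mf + KG"
  have KV: "\<bar>V x\<bar> \<le> KV" if "x \<in> {0..1}" for x
    using V_def[of x] f'b[OF that] KG[OF fA[of x]] unfolding KV_def by linarith
  have Hb: "\<bar>H \<theta>\<bar> \<le> KG + KV" if th: "\<theta> \<in> {\<theta>0 - 1..\<theta>0 + 1}" for \<theta>
  proof -
    obtain xm where xm: "xm \<in> {0..1}" "\<forall>y\<in>{0..1}. F \<theta> y \<le> F \<theta> xm"
      using continuous_attains_sup[of "{0..1::real}" "F \<theta>"] cF by auto
    have glob: "F \<theta> y \<le> F \<theta> xm" for y
    proof -
      have "F \<theta> y = F \<theta> (y - of_int (floor y))" by (rule per_floor[where u="F \<theta>", OF F_per])
      moreover have "y - of_int (floor y) \<in> {0..1}"
        by (auto simp: of_int_floor_le) (smt (verit, best) real_of_int_floor_add_one_gt)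
      ultimately show ?thesis using xm by simp
    qed
    have "F' \<theta> xm = 0"
      by (rule DERIV_local_max[OF F_deriv[of \<theta> xm], of 1]) (use glob in auto)
    then have "H \<theta> = G (F \<theta> xm) + V xm" using H[of \<theta> xm] by simp
    then show ?thesis using KG[OF FA[OF th xm(1)]] KV[OF xm(1)] by linarith
  qed
  define MF where "MF = 2 * (KG + KV)"
  have F'b: "\<bar>F' \<theta> x\<bar> \<le> MF" if "\<theta> \<in> {\<theta>0 - 1..\<theta>0 + 1}" "x \<in> {0..1}" for \<theta> x
  proof -
    have "F' \<theta> x = H \<theta> - G (F \<theta> x) - V x" using H[of \<theta> x] by simp
    then show ?thesis using Hb[OF that(1)] KG[OF FA[OF that]] KV[OF that(2)] unfolding MF_def
      by (simp add: abs_le_iff)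
  qed
  define M where "M = \<bar>MF\<bar> + \<bar>Mf\<bar> + 1"
  have Mpos: "M > 0" unfolding M_def by simp
  have lipg: "\<bar>(F \<theta> x - f x) - (F \<theta> z - f z)\<bar> \<le> M * \<bar>x - z\<bar>"
    if th: "\<theta> \<in> {\<theta>0 - 1..\<theta>0 + 1}" and xz: "x \<in> {0..1}" "z \<in> {0..1}" for \<theta> x z
  proof -
    have "\<bar>F \<theta> x - F \<theta> z\<bar> \<le> MF * \<bar>x - z\<bar>"
      by (rule lip_from_deriv[of 0 1 "F \<theta>" "F' \<theta>" MF]) (use F_deriv F'b[OF th] xz in auto)
    moreover have "\<bar>f x - f z\<bar> \<le> Mf * \<bar>x - z\<bar>"
      by (rule lip_from_deriv[of 0 1 f f' Mf]) (use f_deriv f'b xz in auto)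
    moreover have "MF * \<bar>x - z\<bar> + Mf * \<bar>x - z\<bar> \<le> M * \<bar>x - z\<bar>"
      unfolding M_def by (simp add: distrib_right[symmetric] mult_right_mono)
    ultimately show ?thesis by linarith
  qed
  define \<delta> where "\<delta> e = e/2 * min (1/2) (e/(2*M))" for e
  have \<delta>pos: "\<delta> e > 0" if "e > 0" for e using that Mpos unfolding \<delta>_def by simp
  have up: "F (\<theta>0 + c) y < f y + e"
    if e: "e > 0" and c: "0 < c" "c \<le> 1" "c < \<delta> e" and y: "y \<in> {0..1}" for e c y
  proof (rule ccontr)
    assume "\<not> ?thesis"
    then have gy: "(\<lambda>x. F (\<theta>0 + c) x - f x) y \<ge> e" by simp
    have th: "\<theta>0 + c \<in> {\<theta>0 - 1..\<theta>0 + 1}" using c by simp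
    have "\<delta> e \<le> integral {0..1} (\<lambda>x. F (\<theta>0 + c) x - f x)" unfolding \<delta>_def
      by (rule small_int[where g="\<lambda>x. F (\<theta>0 + c) x - f x" and M=M and y=y and e=e])
        (use ordf c lipg[OF th] Mpos y e gy in \<open>simp_all add: continuous_on_diff cF cf\<close>)
    also have "\<dots> = integral {0..1} (F (\<theta>0 + c)) - integral {0..1} f"
      by (intro integral_diff integrable_continuous_interval cF cf)
    also have "\<dots> = c" using F_int theta0_def by simp
    finally show False using c by simp
  qed
  have dn: "f y - e < F (\<theta>0 - c) y"
    if e: "e > 0" and c: "0 < c" "c \<le> 1" "c < \<delta> e" and y: "y \<in> {0..1}" for e c y
  proof (rule ccontr)
    assume "\<not> ?thesis"
    then have gy: "(\<lambda>x. f x - F (\<theta>0 - c) x) y \<ge> e" by simp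
    have th: "\<theta>0 - c \<in> {\<theta>0 - 1..\<theta>0 + 1}" using c by simp
    have lip2: "\<forall>x\<in>{0..1}. \<forall>z\<in>{0..1}. \<bar>(f x - F (\<theta>0 - c) x) - (f z - F (\<theta>0 - c) z)\<bar> \<le> M * \<bar>x - z\<bar>"
    proof (intro ballI)
      fix x z :: real assume xz: "x \<in> {0..1}" "z \<in> {0..1}"
      have "\<bar>(F (\<theta>0 - c) x - f x) - (F (\<theta>0 - c) z - f z)\<bar> \<le> M * \<bar>x - z\<bar>"
        by (rule lipg[OF th xz])
      moreover have "(f x - F (\<theta>0 - c) x) - (f z - F (\<theta>0 - c) z) = - ((F (\<theta>0 - c) x - f x) - (F (\<theta>0 - c) z - f z))"
        by simp
      ultimately show "\<bar>(f x - F (\<theta>0 - c) x) - (f z - F (\<theta>0 - c) z)\<bar> \<le> M * \<bar>x - z\<bar>"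
        by (simp only: abs_minus_cancel)
    qed
    have "\<delta> e \<le> integral {0..1} (\<lambda>x. f x - F (\<theta>0 - c) x)" unfolding \<delta>_def
      by (rule small_int[where g="\<lambda>x. f x - F (\<theta>0 - c) x" and M=M and y=y and e=e])
        (use ordf2 c lip2 Mpos y e gy in \<open>simp_all add: continuous_on_diff cF cf\<close>)
    also have "\<dots> = integral {0..1} f - integral {0..1} (F (\<theta>0 - c))"
      by (intro integral_diff integrable_continuous_interval cF cf)
    also have "\<dots> = c" using F_int theta0_def by simp
    finally show False using c by simp
  qed
  have eq0: "F \<theta>0 y = f y" if y: "y \<in> {0..1}" for y
  proof (rule ccontr)
    assume neq: "F \<theta>0 y \<noteq> f y"
    define e where "e = \<bar>F \<theta>0 y - f y\<bar>"
    have e: "e > 0" using neq by (simp add: e_def)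
    define c where "c = min (1/2) (\<delta> e / 2)"
    have c: "0 < c" "c \<le> 1" "c < \<delta> e" using \<delta>pos[OF e] by (auto simp: c_def)
    have "F (\<theta>0 - c) y \<le> F \<theta>0 y" "F \<theta>0 y \<le> F (\<theta>0 + c) y" using ordF c by auto
    then have "\<bar>F \<theta>0 y - f y\<bar> < e" using up[OF e c y] dn[OF e c y] by (simp add: abs_less_iff)
    then show False unfolding e_def by simp
  qed
  have img0: "F \<theta>0 ` {0..1} = f ` {0..1}" by (rule image_cong[OF refl eq0])
  have Lr: "0 < L - ell" "L \<le> 1 - ell" using ell_lt by auto
  have Inf0: "Inf (F \<theta>0 ` {0..1}) = p1"
    unfolding img0
  proof (rule cInf_eq_minimum)
    show "p1 \<in> f ` {0..1}" using f_left[of 0] Lr ell_pos by (auto intro!: image_eqI[of _ _ 0])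
    show "\<And>x. x \<in> f ` {0..1} \<Longrightarrow> p1 \<le> x" using f_bounds by auto
  qed
  have Sup0: "Sup (F \<theta>0 ` {0..1}) = p2"
    unfolding img0
  proof (rule cSup_eq_maximum)
    show "p2 \<in> f ` {0..1}" using f_right[of L] Lr ell_pos by (auto intro!: image_eqI[of _ _ L])
    show "\<And>x. x \<in> f ` {0..1} \<Longrightarrow> x \<le> p2" using f_bounds by auto
  qed
  have fL: "f L = p2" "L \<in> {0..1}" using f_right[of L] Lr ell_pos by auto
  have f0: "f 0 = p1" using f_left[of 0] Lr by auto
  define h where "h p = \<bar>G' p\<bar>" for p
  have hc: "continuous_on UNIV h" unfolding h_def by (intro continuous_intros cG')
  have cptF: "compact (F \<theta> ` {0..1})" for \<theta>
    by (intro compact_continuous_image cF compact_Icc)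
  have bddA: "bdd_above (F \<theta> ` {0..1})" for \<theta>
    by (intro bounded_imp_bdd_above compact_imp_bounded cptF)
  have bddB: "bdd_below (F \<theta> ` {0..1})" for \<theta>
    by (intro bounded_imp_bdd_below compact_imp_bounded cptF)
  define Sp where "Sp c = Sup (F (\<theta>0 + c) ` {0..1})" for c
  define Im where "Im c = Inf (F (\<theta>0 - c) ` {0..1})" for c
  have Sp_ge: "p2 \<le> Sp c" if "0 < c" for c
  proof -
    have "F (\<theta>0 + c) L \<le> Sp c" unfolding Sp_def using fL by (intro cSup_upper bddA) auto
    then show ?thesis using ordf[OF that, of L] fL by simp
  qed
  have Im_le: "Im c \<le> p1" if "0 < c" for c
  proof -
    have "Im c \<le> F (\<theta>0 - c) 0" unfolding Im_def by (intro cInf_lower bddB) auto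
    then show ?thesis using ordf2[OF that, of 0] f0 by simp
  qed
  have Sp_mono: "Sp c1 \<le> Sp c2" if "0 < c1" "c1 \<le> c2" for c1 c2
    unfolding Sp_def
  proof (rule cSup_least)
    show "F (\<theta>0 + c1) ` {0..1} \<noteq> {}" by auto
    fix z assume "z \<in> F (\<theta>0 + c1) ` {0..1}"
    then obtain y where y: "y \<in> {0..1}" "z = F (\<theta>0 + c1) y" by auto
    have "F (\<theta>0 + c1) y \<le> F (\<theta>0 + c2) y" using ordF' that by simp
    also have "\<dots> \<le> Sup (F (\<theta>0 + c2) ` {0..1})" using y by (intro cSup_upper bddA) auto
    finally show "z \<le> Sup (F (\<theta>0 + c2) ` {0..1})" using y by simp
  qed
  have Im_mono: "Im c2 \<le> Im c1" if "0 < c1" "c1 \<le> c2" for c1 c2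
    unfolding Im_def
  proof (rule cInf_greatest)
    show "F (\<theta>0 - c1) ` {0..1} \<noteq> {}" by auto
    fix z assume "z \<in> F (\<theta>0 - c1) ` {0..1}"
    then obtain y where y: "y \<in> {0..1}" "z = F (\<theta>0 - c1) y" by auto
    have "Inf (F (\<theta>0 - c2) ` {0..1}) \<le> F (\<theta>0 - c2) y" using y by (intro cInf_lower bddB) auto
    also have "F (\<theta>0 - c2) y \<le> F (\<theta>0 - c1) y" using ordF' that by simp
    finally show "Inf (F (\<theta>0 - c2) ` {0..1}) \<le> z" using y by simp
  qed
  have Sp_small: "Sp c \<le> p2 + e" if e: "e > 0" and c: "0 < c" "c \<le> 1" "c < \<delta> e" for e c
    unfolding Sp_def
  proof (rule cSup_least)
    show "F (\<theta>0 + c) ` {0..1} \<noteq> {}" by auto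
    fix z assume "z \<in> F (\<theta>0 + c) ` {0..1}"
    then obtain y where y: "y \<in> {0..1}" "z = F (\<theta>0 + c) y" by auto
    show "z \<le> p2 + e" using up[OF e c y(1)] f_bounds[of y] y by simp
  qed
  have Im_small: "p1 - e \<le> Im c" if e: "e > 0" and c: "0 < c" "c \<le> 1" "c < \<delta> e" for e c
    unfolding Im_def
  proof (rule cInf_greatest)
    show "F (\<theta>0 - c) ` {0..1} \<noteq> {}" by auto
    fix z assume "z \<in> F (\<theta>0 - c) ` {0..1}"
    then obtain y where y: "y \<in> {0..1}" "z = F (\<theta>0 - c) y" by auto
    show "p1 - e \<le> z" using dn[OF e c y(1)] f_bounds[of y] y by simp
  qed
  have K1a: "K1_pair G' F \<theta>0 (\<theta>0 + c) = SupI h p1 (Sp c)" for c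
    unfolding K1_pair_def SupI_def h_def Sp_def Inf0 by simp
  have K1b: "K1_pair G' F (\<theta>0 - c) \<theta>0 = SupI h (Im c) p2" for c
    unfolding K1_pair_def SupI_def h_def Im_def Sup0 by simp
  have tgt: "Sup ((\<lambda>p. \<bar>G' p\<bar>) ` {p1..p2}) = SupI h p1 p2"
    unfolding SupI_def h_def by simp
  have P1: "\<forall>c1 c2. 0 < c1 \<and> c1 \<le> c2 \<longrightarrow> SupI h p1 (Sp c1) \<le> SupI h p1 (Sp c2)"
  proof (intro allI impI)
    fix c1 c2 :: real assume c: "0 < c1 \<and> c1 \<le> c2"
    show "SupI h p1 (Sp c1) \<le> SupI h p1 (Sp c2)"
      by (rule SupI_mono[OF hc]) (use Sp_ge[of c1] Sp_mono[of c1 c2] c p12 in auto)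
  qed
  have P3: "\<forall>c1 c2. 0 < c1 \<and> c1 \<le> c2 \<longrightarrow> SupI h (Im c1) p2 \<le> SupI h (Im c2) p2"
  proof (intro allI impI)
    fix c1 c2 :: real assume c: "0 < c1 \<and> c1 \<le> c2"
    show "SupI h (Im c1) p2 \<le> SupI h (Im c2) p2"
      by (rule SupI_mono[OF hc]) (use Im_le[of c1] Im_mono[of c1 c2] c p12 in auto)
  qed
  have P2: "((\<lambda>c. SupI h p1 (Sp c)) \<longlongrightarrow> SupI h p1 p2) (at_right 0)"
    unfolding tendsto_iff eventually_at_right_field
  proof (intro allI impI)
    fix \<epsilon> :: real assume \<epsilon>: "\<epsilon> > 0"
    obtain d1 where d1: "d1 > 0" "\<forall>a b. a \<le> p1 \<longrightarrow> p1 - a < d1 \<longrightarrow> p2 \<le> b \<longrightarrow> b - p2 < d1 \<longrightarrow>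
            SupI h a b \<le> SupI h p1 p2 + \<epsilon>/2"
      using SupI_cont[OF hc, of p1 p2 "\<epsilon>/2"] p12 \<epsilon> by auto
    show "\<exists>b>0. \<forall>y>0. y < b \<longrightarrow> dist (SupI h p1 (Sp y)) (SupI h p1 p2) < \<epsilon>"
    proof (intro exI[of _ "min 1 (\<delta> (d1/2))"] conjI allI impI)
      show "0 < min 1 (\<delta> (d1/2))" using \<delta>pos[of "d1/2"] d1 by simp
      fix c :: real assume c: "0 < c" "c < min 1 (\<delta> (d1/2))"
      have b: "p2 \<le> Sp c" "Sp c \<le> p2 + d1/2" using Sp_ge[of c] Sp_small[of "d1/2" c] c d1 by auto
      then have "SupI h p1 (Sp c) \<le> SupI h p1 p2 + \<epsilon>/2" using d1 by auto
      moreover have "SupI h p1 p2 \<le> SupI h p1 (Sp c)"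
        by (rule SupI_mono[OF hc]) (use p12 b in auto)
      ultimately show "dist (SupI h p1 (Sp c)) (SupI h p1 p2) < \<epsilon>"
        using \<epsilon> by (simp add: dist_real_def abs_less_iff)
    qed
  qed
  have P4: "((\<lambda>c. SupI h (Im c) p2) \<longlongrightarrow> SupI h p1 p2) (at_right 0)"
    unfolding tendsto_iff eventually_at_right_field
  proof (intro allI impI)
    fix \<epsilon> :: real assume \<epsilon>: "\<epsilon> > 0"
    obtain d1 where d1: "d1 > 0" "\<forall>a b. a \<le> p1 \<longrightarrow> p1 - a < d1 \<longrightarrow> p2 \<le> b \<longrightarrow> b - p2 < d1 \<longrightarrow>
            SupI h a b \<le> SupI h p1 p2 + \<epsilon>/2"
      using SupI_cont[OF hc, of p1 p2 "\<epsilon>/2"] p12 \<epsilon> by auto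
    show "\<exists>b>0. \<forall>y>0. y < b \<longrightarrow> dist (SupI h (Im y) p2) (SupI h p1 p2) < \<epsilon>"
    proof (intro exI[of _ "min 1 (\<delta> (d1/2))"] conjI allI impI)
      show "0 < min 1 (\<delta> (d1/2))" using \<delta>pos[of "d1/2"] d1 by simp
      fix c :: real assume c: "0 < c" "c < min 1 (\<delta> (d1/2))"
      have b: "Im c \<le> p1" "p1 - d1/2 \<le> Im c" using Im_le[of c] Im_small[of "d1/2" c] c d1 by auto
      then have "SupI h (Im c) p2 \<le> SupI h p1 p2 + \<epsilon>/2" using d1 by auto
      moreover have "SupI h p1 p2 \<le> SupI h (Im c) p2"
        by (rule SupI_mono[OF hc]) (use p12 b in auto)
      ultimately show "dist (SupI h (Im c) p2) (SupI h p1 p2) < \<epsilon>"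
        using \<epsilon> by (simp add: dist_real_def abs_less_iff)
    qed
  qed
  show ?thesis
    unfolding K1a K1b tgt by (intro conjI P1 P2 P3 P4)
qed

end
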